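(* Let $V$ be a finite-dimensional real vector space with a non-degenerate inner product $g$, and $F\in\Lambda^5V^*$ a 5-form satisfying, for all $X,Y\in V$, $\iota_XF_L\wedge\iota_YF^L=0$ and $\iota_XF_L\wedge F^L=0$. Then $\iota_Y\iota_XF_L\wedge F^L=0$ and $\iota_Z\iota_Y\iota_XF_L\wedge F^L=0$ for all $X,Y,Z\in V$.
   Context: For a basis $e_L$ of $V$, $F_L=\iota_{e_L}F$, and expressions like $\alpha_L\wedge\beta^L$ denote the contraction $\sum_{L,K}g^{LK}\alpha_L\wedge\beta_K$ with the inverse metric. $\iota_X$ is interior multiplication by $X$. *)

theory Defs
  imports Complex_Main
begin

text \<open>Coordinate model: V = R^n with standard basis e_0,...,e_{n-1}; a vector is
  given by its components (X i for i < n).  A differential form is given by its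
  components in the basis e^I = e^{i_1} \<and> ... \<and> e^{i_k} (i_1 < ... < i_k) of the
  exterior algebra of V^*, i.e. as a function on index sets I \<subseteq> {0..<n}.\<close>

type_synonym vec = "nat \<Rightarrow> real"
type_synonym form = "nat set \<Rightarrow> real"

definition is_kform :: "nat \<Rightarrow> nat \<Rightarrow> form \<Rightarrow> bool" where
  "is_kform n k \<alpha> \<longleftrightarrow> (\<forall>I. \<alpha> I \<noteq> 0 \<longrightarrow> I \<subseteq> {..<n} \<and> card I = k)"

text \<open>Sign of e^I \<and> e^J = sign * e^(I \<union> J) for disjoint I, J.\<close>
definition shuffle_sign :: "nat set \<Rightarrow> nat set \<Rightarrow> real" where
  "shuffle_sign I J = (-1) ^ card {(i, j). i \<in> I \<and> j \<in> J \<and> j < i}"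

definition wedge :: "nat \<Rightarrow> form \<Rightarrow> form \<Rightarrow> form" where
  "wedge n \<alpha> \<beta> = (\<lambda>K. if K \<subseteq> {..<n}
      then (\<Sum>I\<in>Pow K. shuffle_sign I (K - I) * \<alpha> I * \<beta> (K - I)) else 0)"

text \<open>Interior multiplication: \<iota>_{e_i} e^I = (-1)^{#{j \<in> I. j < i}} e^{I - {i}} if i \<in> I, else 0.\<close>
definition interior :: "nat \<Rightarrow> vec \<Rightarrow> form \<Rightarrow> form" where
  "interior n X \<alpha> = (\<lambda>K. if K \<subseteq> {..<n}
      then (\<Sum>i<n. if i \<in> K then 0
              else X i * (-1) ^ card {j\<in>K. j < i} * \<alpha> (insert i K)) else 0)"

definition basis_vec :: "nat \<Rightarrow> vec" where
  "basis_vec i = (\<lambda>j. if j = i then 1 else 0)"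

text \<open>Contraction \<alpha>_L \<and> \<beta>^L = \<Sum>_{L,K} g^{LK} \<alpha>_L \<and> \<beta>_K, where \<alpha>_L = A L and \<beta>_K = B K,
  and ginv is the inverse metric.\<close>
definition contr_wedge :: "nat \<Rightarrow> (nat \<Rightarrow> nat \<Rightarrow> real) \<Rightarrow> (nat \<Rightarrow> form) \<Rightarrow> (nat \<Rightarrow> form) \<Rightarrow> form" where
  "contr_wedge n ginv A B = (\<lambda>K. \<Sum>L<n. \<Sum>M<n. ginv L M * wedge n (A L) (B M) K)"

definition F_idx :: "nat \<Rightarrow> form \<Rightarrow> nat \<Rightarrow> form" where
  "F_idx n F L = interior n (basis_vec L) F"

definition nondeg_metric_with_inverse :: "nat \<Rightarrow> (nat \<Rightarrow> nat \<Rightarrow> real) \<Rightarrow> (nat \<Rightarrow> nat \<Rightarrow> real) \<Rightarrow> bool" where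
  "nondeg_metric_with_inverse n g ginv \<longleftrightarrow>
     (\<forall>i<n. \<forall>j<n. g i j = g j i) \<and>
     (\<forall>i<n. \<forall>j<n. (\<Sum>k<n. g i k * ginv k j) = (if i = j then 1 else 0))"

end

theory Submission
  imports Defs "Jordan_Normal_Form.Determinant"
begin


definition ninv :: "nat set \<Rightarrow> nat set \<Rightarrow> nat" where
  "ninv A B = card {(a,b). a \<in> A \<and> b \<in> B \<and> b < a}"

lemma ninv_fin: "finite A \<Longrightarrow> finite B \<Longrightarrow> finite {(a,b). a \<in> A \<and> b \<in> B \<and> b < a}"
  by (rule finite_subset[of _ "A \<times> B"]) auto

lemma ninv_Un_left:
  assumes "finite A" "finite B" "finite C" "A \<inter> B = {}"
  shows "ninv (A \<union> B) C = ninv A C + ninv B C"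
proof -
  have "{(a,b). a \<in> A \<union> B \<and> b \<in> C \<and> b < a} =
        {(a,b). a \<in> A \<and> b \<in> C \<and> b < a} \<union> {(a,b). a \<in> B \<and> b \<in> C \<and> b < a}" by auto
  then show ?thesis unfolding ninv_def using assms
    by (simp add: card_Un_disjoint ninv_fin disjoint_iff)
qed

lemma ninv_Un_right:
  assumes "finite A" "finite B" "finite C" "B \<inter> C = {}"
  shows "ninv A (B \<union> C) = ninv A B + ninv A C"
proof -
  have "{(a,b). a \<in> A \<and> b \<in> B \<union> C \<and> b < a} =
        {(a,b). a \<in> A \<and> b \<in> B \<and> b < a} \<union> {(a,b). a \<in> A \<and> b \<in> C \<and> b < a}" by auto
  then show ?thesis unfolding ninv_def using assms
    by (simp add: card_Un_disjoint ninv_fin disjoint_iff)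
qed

lemma ninv_swap:
  assumes "finite A" "finite B" "A \<inter> B = {}"
  shows "ninv A B + ninv B A = card A * card B"
proof -
  have e: "{(a,b). b \<in> B \<and> a \<in> A \<and> a < b} = prod.swap ` {(a,b). a \<in> B \<and> b \<in> A \<and> b < a}" by auto
  have c: "ninv B A = card {(a,b). b \<in> B \<and> a \<in> A \<and> a < b}"
    unfolding ninv_def e by (rule card_image[symmetric]) (simp add: inj_on_def)
  have u: "A \<times> B = {(a,b). a \<in> A \<and> b \<in> B \<and> b < a} \<union> {(a,b). b \<in> B \<and> a \<in> A \<and> a < b}"
    using assms(3) by (auto simp: disjoint_iff) (metis linorder_neqE_nat)
  have "card (A \<times> B) = card {(a,b). a \<in> A \<and> b \<in> B \<and> b < a} + card {(a,b). b \<in> B \<and> a \<in> A \<and> a < b}"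
    unfolding u
    by (rule card_Un_disjoint) (auto intro: finite_subset[of _ "A \<times> B"] simp: assms)
  then have "card (A \<times> B) = ninv A B + ninv B A" unfolding c by (simp add: ninv_def)
  then show ?thesis by (simp add: card_cartesian_product)
qed

lemma ninv_single: "finite K \<Longrightarrow> card {j\<in>K. j < i} = ninv {i} K"
proof -
  assume "finite K"
  have "{(a,b). a \<in> {i} \<and> b \<in> K \<and> b < a} = (\<lambda>j. (i,j)) ` {j\<in>K. j < i}" by auto
  then show ?thesis unfolding ninv_def by (simp add: card_image inj_on_def)
qed

lemma neg1_par: "even (m + m') \<Longrightarrow> (-1::real)^m = (-1)^m'"
  by (simp add: minus_one_power_iff)

lemma neg1_par_neg: "odd (m + m') \<Longrightarrow> (-1::real)^m = - ((-1)^m')"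
  by (simp add: minus_one_power_iff)

lemma ss_ninv: "shuffle_sign I J = (-1)^ninv I J"
  unfolding shuffle_sign_def ninv_def by simp

lemma sgn_a:
  assumes "finite K" "i \<notin> K" "I \<subseteq> K"
  shows "(-1::real)^card {j\<in>K. j<i} * shuffle_sign (insert i I) (K-I)
       = shuffle_sign I (K-I) * (-1)^card {j\<in>I. j<i}"
proof -
  have fI: "finite I" using assms finite_subset by blast
  have K: "K = I \<union> (K - I)" using assms by auto
  have 1: "ninv {i} K = ninv {i} I + ninv {i} (K-I)"
    by (subst K) (rule ninv_Un_right, use fI assms in auto)
  have 2: "ninv (insert i I) (K-I) = ninv {i} (K-I) + ninv I (K-I)"
    using ninv_Un_left[of "{i}" I "K-I"] fI assms by auto
  show ?thesis unfolding ss_ninv ninv_single[OF assms(1)] ninv_single[OF fI] 1 2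
    unfolding power_add[symmetric] by (rule neg1_par) presburger
qed

lemma sgn_b:
  assumes "finite K" "i \<notin> K" "I \<subseteq> K"
  shows "(-1::real)^card {j\<in>K. j<i} * shuffle_sign I (insert i (K-I))
       = (-1)^card I * (shuffle_sign I (K-I) * (-1)^card {j\<in>K-I. j<i})"
proof -
  have fI: "finite I" using assms finite_subset by blast
  have K: "K = I \<union> (K - I)" using assms by auto
  have 1: "ninv {i} K = ninv {i} I + ninv {i} (K-I)"
    by (subst K) (rule ninv_Un_right, use fI assms in auto)
  have 2: "ninv I (insert i (K-I)) = ninv I {i} + ninv I (K-I)"
    using ninv_Un_right[of I "{i}" "K-I"] fI assms by auto
  have 3: "ninv I {i} + ninv {i} I = card I"
    using ninv_swap[of I "{i}"] fI assms by auto
  have fKI: "finite (K-I)" using assms by auto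
  show ?thesis unfolding ss_ninv ninv_single[OF assms(1)] ninv_single[OF fI]
     ninv_single[OF fKI] 1 2 3[symmetric]
    unfolding power_add[symmetric] by (rule neg1_par) presburger
qed

lemma sgn_c:
  assumes "finite K" "i \<in> K" "i \<notin> I" "I \<subseteq> K"
  shows "shuffle_sign I (K-I) * (-1::real)^card {j\<in>I. j<i}
       = - ((-1)^(card I + 1) * (shuffle_sign (insert i I) (K - insert i I) * (-1)^card {j\<in>K - insert i I. j<i}))"
proof -
  define J where "J = K - insert i I"
  have fI: "finite I" using assms finite_subset by blast
  have fJ: "finite J" using assms J_def by auto
  have KI: "K - I = {i} \<union> J" using assms J_def by auto
  have 1: "ninv I (K - I) = ninv I {i} + ninv I J"
    unfolding KI by (rule ninv_Un_right) (use fI fJ J_def in auto)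
  have 2: "ninv (insert i I) J = ninv {i} J + ninv I J"
    using ninv_Un_left[of "{i}" I J] fI fJ assms by auto
  have 3: "ninv I {i} + ninv {i} I = card I"
    using ninv_swap[of I "{i}"] fI assms by auto
  show ?thesis unfolding J_def[symmetric] ss_ninv ninv_single[OF fI] ninv_single[OF fJ] 1 2
    unfolding power_add[symmetric] mult_minus_left[symmetric]
    by (rule neg1_par_neg) (use 3 in presburger)
qed



lemma wedge_insert:
  assumes "finite K" "i \<notin> K"
  shows "(\<Sum>I\<in>Pow (insert i K). shuffle_sign I (insert i K - I) * \<alpha> I * \<beta> (insert i K - I))
       = (\<Sum>I\<in>Pow K. shuffle_sign (insert i I) (K - I) * \<alpha> (insert i I) * \<beta> (K - I)
                     + shuffle_sign I (insert i (K - I)) * \<alpha> I * \<beta> (insert i (K - I)))"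
proof -
  have inj: "inj_on (insert i) (Pow K)" using assms(2) unfolding inj_on_def by (metis PowD insert_ident subsetD)
  have d: "Pow K \<inter> insert i ` Pow K = {}" using assms(2) by auto
  have "(\<Sum>I\<in>Pow (insert i K). shuffle_sign I (insert i K - I) * \<alpha> I * \<beta> (insert i K - I))
     = (\<Sum>I\<in>Pow K. shuffle_sign I (insert i K - I) * \<alpha> I * \<beta> (insert i K - I))
     + (\<Sum>I\<in>insert i ` Pow K. shuffle_sign I (insert i K - I) * \<alpha> I * \<beta> (insert i K - I))"
    unfolding Pow_insert by (rule sum.union_disjoint) (use assms d in auto)
  also have "(\<Sum>I\<in>insert i ` Pow K. shuffle_sign I (insert i K - I) * \<alpha> I * \<beta> (insert i K - I))
      = (\<Sum>I\<in>Pow K. shuffle_sign (insert i I) (K - I) * \<alpha> (insert i I) * \<beta> (K - I))"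
  proof -
    have e: "insert i K - insert i I = K - I" "K - insert i I = K - I" if "I \<in> Pow K" for I using that assms by auto
    show ?thesis by (subst sum.reindex[OF inj]) (auto intro!: sum.cong simp: e)
  qed
  also have "(\<Sum>I\<in>Pow K. shuffle_sign I (insert i K - I) * \<alpha> I * \<beta> (insert i K - I))
     = (\<Sum>I\<in>Pow K. shuffle_sign I (insert i (K - I)) * \<alpha> I * \<beta> (insert i (K - I)))"
  proof (rule sum.cong[OF refl])
    fix I assume "I \<in> Pow K"
    then have "insert i K - I = insert i (K - I)" using assms by auto
    then show "shuffle_sign I (insert i K - I) * \<alpha> I * \<beta> (insert i K - I) =
         shuffle_sign I (insert i (K - I)) * \<alpha> I * \<beta> (insert i (K - I))" by simp
  qed
  finally show ?thesis by (simp add: sum.distrib)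
qed

lemma interior_wedge:
  fixes \<alpha> \<beta> :: form
  assumes deg: "\<forall>I. \<alpha> I \<noteq> 0 \<longrightarrow> card I = k"
  shows "interior n X (wedge n \<alpha> \<beta>) K
       = wedge n (interior n X \<alpha>) \<beta> K + (-1)^k * wedge n \<alpha> (interior n X \<beta>) K"
proof (cases "K \<subseteq> {..<n}")
  case False
  then show ?thesis by (simp add: interior_def wedge_def)
next
  case True
  have fK: "finite K" using True finite_subset by blast
  define s :: "nat \<Rightarrow> nat set \<Rightarrow> real" where "s i I = (-1::real)^card {j\<in>I. j<i}" for i I
  define a where "a i I = X i * s i K * shuffle_sign (insert i I) (K - I) * \<alpha> (insert i I) * \<beta> (K - I)" for i I
  define b where "b i I = X i * s i K * shuffle_sign I (insert i (K - I)) * \<alpha> I * \<beta> (insert i (K - I))" for i I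
  define t1 where "t1 I i = (if i \<in> I then 0 else shuffle_sign I (K-I) * (X i * s i I * \<alpha> (insert i I)) * \<beta> (K-I))" for I i
  define t2 where "t2 I i = (if i \<in> K - I then 0 else shuffle_sign I (K-I) * \<alpha> I * (X i * s i (K - I) * \<beta> (insert i (K-I))))" for I i
  have L: "interior n X (wedge n \<alpha> \<beta>) K = (\<Sum>i<n. if i \<in> K then 0 else (\<Sum>I\<in>Pow K. a i I + b i I))"
    unfolding interior_def using True
  proof (simp only: if_True, intro sum.cong[OF refl])
    fix i assume i: "i \<in> {..<n}"
    show "(if i \<in> K then 0 else X i * (- 1) ^ card {j \<in> K. j < i} * wedge n \<alpha> \<beta> (insert i K)) =
         (if i \<in> K then 0 else \<Sum>I\<in>Pow K. a i I + b i I)"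
    proof (cases "i \<in> K")
      case False
      have "insert i K \<subseteq> {..<n}" using i True by auto
      then have "wedge n \<alpha> \<beta> (insert i K) = (\<Sum>I\<in>Pow K. shuffle_sign (insert i I) (K - I) * \<alpha> (insert i I) * \<beta> (K - I)
                     + shuffle_sign I (insert i (K - I)) * \<alpha> I * \<beta> (insert i (K - I)))"
        unfolding wedge_def using wedge_insert[OF fK False] by simp
      then show ?thesis using False unfolding a_def b_def s_def
        by (simp add: sum_distrib_left algebra_simps)
    qed simp
  qed
  have R1: "wedge n (interior n X \<alpha>) \<beta> K = (\<Sum>I\<in>Pow K. \<Sum>i<n. t1 I i)"
    unfolding wedge_def using True
  proof (simp only: if_True, intro sum.cong[OF refl])
    fix I assume "I \<in> Pow K"
    then have "I \<subseteq> {..<n}" using True by auto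
    then show "shuffle_sign I (K - I) * interior n X \<alpha> I * \<beta> (K - I) = (\<Sum>i<n. t1 I i)"
      unfolding interior_def t1_def s_def by (auto simp: sum_distrib_left sum_distrib_right intro!: sum.cong)
  qed
  have R2: "wedge n \<alpha> (interior n X \<beta>) K = (\<Sum>I\<in>Pow K. \<Sum>i<n. t2 I i)"
    unfolding wedge_def using True
  proof (simp only: if_True, intro sum.cong[OF refl])
    fix I assume "I \<in> Pow K"
    then have "K - I \<subseteq> {..<n}" using True by auto
    then show "shuffle_sign I (K - I) * \<alpha> I * interior n X \<beta> (K - I) = (\<Sum>i<n. t2 I i)"
      unfolding interior_def t2_def s_def by (auto simp: sum_distrib_left intro!: sum.cong)
  qed
  have R: "wedge n (interior n X \<alpha>) \<beta> K + (-1)^k * wedge n \<alpha> (interior n X \<beta>) K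
      = (\<Sum>i<n. \<Sum>I\<in>Pow K. t1 I i + (-1)^k * t2 I i)"
  proof -
    have "(\<Sum>i<n. \<Sum>I\<in>Pow K. t1 I i + (-1)^k * t2 I i)
       = (\<Sum>i<n. \<Sum>I\<in>Pow K. t1 I i) + (-1)^k * (\<Sum>i<n. \<Sum>I\<in>Pow K. t2 I i)"
      by (simp add: sum.distrib sum_distrib_left)
    moreover have "(\<Sum>I\<in>Pow K. \<Sum>i<n. t1 I i) = (\<Sum>i<n. \<Sum>I\<in>Pow K. t1 I i)" by (rule sum.swap)
    moreover have "(\<Sum>I\<in>Pow K. \<Sum>i<n. t2 I i) = (\<Sum>i<n. \<Sum>I\<in>Pow K. t2 I i)" by (rule sum.swap)
    ultimately show ?thesis unfolding R1 R2 by simp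
  qed
  have split: "{..<n} = ({..<n} - K) \<union> K" using True by auto
  have P1: "(\<Sum>I\<in>Pow K. a i I + b i I) = (\<Sum>I\<in>Pow K. t1 I i + (-1)^k * t2 I i)"
    if i: "i \<in> {..<n} - K" for i
  proof (rule sum.cong[OF refl])
    fix I assume I: "I \<in> Pow K"
    have iI: "i \<notin> I" "i \<notin> K - I" using i I by auto
    have "a i I = t1 I i"
    proof -
      have sa: "s i K * shuffle_sign (insert i I) (K - I) = shuffle_sign I (K-I) * s i I"
        unfolding s_def using sgn_a[OF fK, of i I] i I by auto
      have "a i I = X i * (s i K * shuffle_sign (insert i I) (K - I)) * \<alpha> (insert i I) * \<beta> (K - I)"
        unfolding a_def by (simp only: mult.assoc)
      also have "\<dots> = t1 I i" unfolding sa t1_def using iI by (simp add: mult_ac)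
      finally show ?thesis .
    qed
    moreover have "b i I = (-1)^k * t2 I i"
    proof (cases "\<alpha> I = 0")
      case True then show ?thesis unfolding b_def t2_def by simp
    next
      case False
      then have "card I = k" using deg by auto
      have sb: "s i K * shuffle_sign I (insert i (K - I)) = (-1)^k * (shuffle_sign I (K-I) * s i (K - I))"
        unfolding s_def using sgn_b[OF fK, of i I] i I \<open>card I = k\<close> by auto
      have "b i I = X i * (s i K * shuffle_sign I (insert i (K - I))) * \<alpha> I * \<beta> (insert i (K - I))"
        unfolding b_def by (simp only: mult.assoc)
      also have "\<dots> = (-1)^k * t2 I i" unfolding sb t2_def using iI by (simp add: mult_ac)
      finally show ?thesis .
    qed
    ultimately show "a i I + b i I = t1 I i + (-1)^k * t2 I i" by simp
  qed
  have P2: "(\<Sum>I\<in>Pow K. t1 I i + (-1)^k * t2 I i) = 0" if i: "i \<in> K" for i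
  proof -
    let ?A = "{I\<in>Pow K. i \<notin> I}"
    have inj: "inj_on (insert i) ?A" unfolding inj_on_def by (metis (mono_tags, lifting) mem_Collect_eq insert_ident)
    have PK: "Pow K = ?A \<union> insert i ` ?A"
    proof
      show "Pow K \<subseteq> ?A \<union> insert i ` ?A"
      proof
        fix I assume I: "I \<in> Pow K"
        show "I \<in> ?A \<union> insert i ` ?A"
        proof (cases "i \<in> I")
          case True
          then have "I = insert i (I - {i})" by blast
          moreover have "I - {i} \<in> ?A" using I by blast
          ultimately show ?thesis by blast
        qed (use I in blast)
      qed
    qed (use i in blast)
    have d: "?A \<inter> insert i ` ?A = {}" by auto
    have "(\<Sum>I\<in>Pow K. t1 I i + (-1)^k * t2 I i) = (\<Sum>I\<in>?A. t1 I i + (-1)^k * t2 I i)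
        + (\<Sum>I\<in>insert i ` ?A. t1 I i + (-1)^k * t2 I i)"
      by (subst PK, rule sum.union_disjoint) (use fK d in auto)
    also have "\<dots> = (\<Sum>I\<in>?A. t1 I i + (-1)^k * t2 (insert i I) i)"
    proof -
      have z1: "t2 I i = 0" if "I \<in> ?A" for I using that i unfolding t2_def by auto
      have z2: "t1 (insert i I) i = 0" for I unfolding t1_def by auto
      have "(\<Sum>I\<in>insert i ` ?A. t1 I i + (-1)^k * t2 I i) = (\<Sum>I\<in>?A. t1 (insert i I) i + (-1)^k * t2 (insert i I) i)"
        by (rule sum.reindex_cong[OF inj refl refl])
      also have "\<dots> = (\<Sum>I\<in>?A. (-1)^k * t2 (insert i I) i)" by (simp only: z2 add_0_left)
      finally have 1: "(\<Sum>I\<in>insert i ` ?A. t1 I i + (-1)^k * t2 I i) = (\<Sum>I\<in>?A. (-1)^k * t2 (insert i I) i)" .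
      have 2: "(\<Sum>I\<in>?A. t1 I i + (-1)^k * t2 I i) = (\<Sum>I\<in>?A. t1 I i)"
        by (rule sum.cong[OF refl]) (simp add: z1)
      show ?thesis by (subst 1, subst 2, simp only: sum.distrib)
    qed
    also have "\<dots> = 0"
    proof (rule sum.neutral, rule ballI)
      fix I assume I: "I \<in> ?A"
      show "t1 I i + (-1)^k * t2 (insert i I) i = 0"
      proof (cases "\<alpha> (insert i I) = 0")
        case True then show ?thesis unfolding t1_def t2_def by simp
      next
        case False
        then have "card (insert i I) = k" using deg by auto
        moreover have "finite I" using I fK finite_subset by auto
        ultimately have k: "k = card I + 1" using I by simp
        have e: "insert i (K - insert i I) = K - I" using I i by auto
        have iI: "i \<notin> I" "i \<notin> K - insert i I" using I by auto
        have sc: "shuffle_sign I (K-I) * s i I = - ((-1)^k * (shuffle_sign (insert i I) (K - insert i I) * s i (K - insert i I)))"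
          unfolding s_def k using sgn_c[OF fK i, of I] I by auto
        have "t1 I i = X i * (shuffle_sign I (K-I) * s i I) * \<alpha> (insert i I) * \<beta> (K - I)"
          unfolding t1_def using iI by (simp add: mult_ac)
        also have "\<dots> = - ((-1)^k * t2 (insert i I) i)" unfolding sc t2_def e using iI
          by (simp add: mult_ac)
        finally show ?thesis by simp
      qed
    qed
    finally show ?thesis .
  qed
  have "interior n X (wedge n \<alpha> \<beta>) K = (\<Sum>i\<in>{..<n} - K. \<Sum>I\<in>Pow K. a i I + b i I)"
    unfolding L by (subst split, subst sum.union_disjoint) (use fK in auto)
  also have "\<dots> = (\<Sum>i\<in>{..<n} - K. \<Sum>I\<in>Pow K. t1 I i + (-1)^k * t2 I i)"
    using P1 by simp
  also have "\<dots> = (\<Sum>i<n. \<Sum>I\<in>Pow K. t1 I i + (-1)^k * t2 I i)"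
    by (subst (2) split, subst sum.union_disjoint) (use fK P2 in auto)
  finally show ?thesis using R by simp
qed



definition hdeg :: "nat \<Rightarrow> form \<Rightarrow> bool" where
  "hdeg k \<alpha> \<longleftrightarrow> (\<forall>I. \<alpha> I \<noteq> 0 \<longrightarrow> card I = k)"

lemma hdeg_interior:
  assumes "hdeg k \<alpha>" shows "hdeg (k - 1) (interior n X \<alpha>)"
  unfolding hdeg_def
proof (intro allI impI)
  fix K assume nz: "interior n X \<alpha> K \<noteq> 0"
  then have K: "K \<subseteq> {..<n}" by (rule contrapos_np) (simp add: interior_def)
  then have fK: "finite K" using finite_subset by blast
  from nz K have "(\<Sum>i<n. if i \<in> K then 0 else X i * (-1) ^ card {j\<in>K. j < i} * \<alpha> (insert i K)) \<noteq> 0"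
    by (simp add: interior_def)
  then obtain i where "(if i \<in> K then 0 else X i * (-1) ^ card {j\<in>K. j < i} * \<alpha> (insert i K)) \<noteq> 0"
    using sum.not_neutral_contains_not_neutral by blast
  then have "i \<notin> K" "\<alpha> (insert i K) \<noteq> 0" by (auto split: if_splits)
  then have "card (insert i K) = k" using assms unfolding hdeg_def by blast
  then show "card K = k - 1" using fK \<open>i \<notin> K\<close> by simp
qed

lemma wedge_comm:
  assumes a: "hdeg k \<alpha>" and b: "hdeg l \<beta>"
  shows "wedge n \<alpha> \<beta> K = (-1)^(k*l) * wedge n \<beta> \<alpha> K"
proof (cases "K \<subseteq> {..<n}")
  case False then show ?thesis by (simp add: wedge_def)
next
  case True
  have fK: "finite K" using True finite_subset by blast
  have "(\<Sum>I\<in>Pow K. shuffle_sign I (K - I) * \<beta> I * \<alpha> (K - I))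
      = (\<Sum>I\<in>Pow K. shuffle_sign (K - I) (K - (K - I)) * \<beta> (K - I) * \<alpha> (K - (K - I)))"
    by (rule sum.reindex_bij_witness[where i="\<lambda>I. K - I" and j="\<lambda>I. K - I"]) (auto simp: Diff_Diff_Int inf.absorb2)
  also have "\<dots> = (\<Sum>I\<in>Pow K. shuffle_sign (K - I) I * \<beta> (K - I) * \<alpha> I)"
    by (rule sum.cong[OF refl]) (auto simp: Diff_Diff_Int inf.absorb2)
  finally have e: "(\<Sum>I\<in>Pow K. shuffle_sign I (K - I) * \<beta> I * \<alpha> (K - I))
      = (\<Sum>I\<in>Pow K. shuffle_sign (K - I) I * \<beta> (K - I) * \<alpha> I)" .
  have "(\<Sum>I\<in>Pow K. shuffle_sign I (K - I) * \<alpha> I * \<beta> (K - I))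
      = (-1)^(k*l) * (\<Sum>I\<in>Pow K. shuffle_sign (K - I) I * \<beta> (K - I) * \<alpha> I)"
    unfolding sum_distrib_left
  proof (rule sum.cong[OF refl])
    fix I assume I: "I \<in> Pow K"
    show "shuffle_sign I (K - I) * \<alpha> I * \<beta> (K - I) = (-1)^(k*l) * (shuffle_sign (K - I) I * \<beta> (K - I) * \<alpha> I)"
    proof (cases "\<alpha> I = 0 \<or> \<beta> (K - I) = 0")
      case True then show ?thesis by auto
    next
      case False
      then have c: "card I = k" "card (K - I) = l" using a b unfolding hdeg_def by auto
      have fI: "finite I" using I fK finite_subset by blast
      have sw: "ninv I (K - I) + ninv (K - I) I = k * l" using ninv_swap[of I "K - I"] fI fK c by auto
      have "shuffle_sign I (K - I) = (-1)^(k*l) * shuffle_sign (K - I) I"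
        unfolding ss_ninv power_add[symmetric] by (rule neg1_par) (use sw in presburger)
      then show ?thesis by (simp add: mult_ac)
    qed
  qed
  then show ?thesis unfolding wedge_def using True e by simp
qed

lemma card_ins_less:
  fixes i j :: nat and K :: "nat set"
  assumes "finite K" "j \<notin> K"
  shows "card {l\<in>insert j K. l < i} = (if j < i then Suc (card {l\<in>K. l < i}) else card {l\<in>K. l < i})"
proof (cases "j < i")
  case True
  then have "{l\<in>insert j K. l < i} = insert j {l\<in>K. l < i}" by auto
  then show ?thesis using assms True by simp
next
  case False
  then have "{l\<in>insert j K. l < i} = {l\<in>K. l < i}" by auto
  then show ?thesis using False by simp
qed

lemma sgn_d:
  fixes i j :: nat and K :: "nat set"
  assumes "finite K" "i \<notin> K" "j \<notin> K" "i \<noteq> j"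
  shows "(-1::real)^card {l\<in>K. l<j} * (-1)^card {l\<in>insert j K. l<i}
       = - ((-1)^card {l\<in>K. l<i} * (-1)^card {l\<in>insert i K. l<j})"
proof (cases "j < i")
  case True
  then have "\<not> i < j" by linarith
  then show ?thesis unfolding card_ins_less[OF assms(1) assms(3)] card_ins_less[OF assms(1) assms(2)] using True by simp
next
  case False
  then have "i < j" using assms(4) by simp
  then show ?thesis unfolding card_ins_less[OF assms(1) assms(3)] card_ins_less[OF assms(1) assms(2)] using False by simp
qed

lemma interior_interior:
  "interior n Y (interior n X \<alpha>) K = - interior n X (interior n Y \<alpha>) K"
proof (cases "K \<subseteq> {..<n}")
  case False then show ?thesis by (simp add: interior_def)
next
  case True
  have fK: "finite K" using True finite_subset by blast
  define h where "h X Y j i = (if j \<in> K \<or> i \<in> K \<or> i = j then 0 else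
     Y j * X i * ((-1::real)^card {l\<in>K. l<j} * (-1)^card {l\<in>insert j K. l<i}) * \<alpha> (insert i (insert j K)))"
    for X Y :: "nat \<Rightarrow> real" and j i
  have ex: "interior n Y (interior n X \<alpha>) K = (\<Sum>j<n. \<Sum>i<n. h X Y j i)" for X Y
    unfolding interior_def using True
  proof (simp only: if_True, intro sum.cong[OF refl])
    fix j assume j: "j \<in> {..<n}"
    show "(if j \<in> K then 0 else Y j * (- 1) ^ card {l \<in> K. l < j} *
          (if insert j K \<subseteq> {..<n} then \<Sum>i<n. if i \<in> insert j K then 0
             else X i * (- 1) ^ card {l \<in> insert j K. l < i} * \<alpha> (insert i (insert j K)) else 0)) =
         (\<Sum>i<n. h X Y j i)"
    proof (cases "j \<in> K")
      case True then show ?thesis by (simp add: h_def)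
    next
      case False
      have "insert j K \<subseteq> {..<n}" using j \<open>K \<subseteq> {..<n}\<close> by auto
      then show ?thesis using False unfolding h_def
        by (auto simp: sum_distrib_left mult_ac intro!: sum.cong)
    qed
  qed
  have "(\<Sum>j<n. \<Sum>i<n. h X Y j i) = - (\<Sum>i<n. \<Sum>j<n. h Y X i j)"
  proof -
    have "(\<Sum>j<n. \<Sum>i<n. h X Y j i) = (\<Sum>j<n. \<Sum>i<n. - h Y X i j)"
    proof (intro sum.cong[OF refl])
      fix j i
      show "h X Y j i = - h Y X i j"
      proof (cases "j \<in> K \<or> i \<in> K \<or> i = j")
        case True then show ?thesis by (auto simp: h_def)
      next
        case False
        then have "insert i (insert j K) = insert j (insert i K)" by auto
        then show ?thesis using False sgn_d[OF fK, of i j] unfolding h_def by (simp add: mult_ac)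
      qed
    qed
    also have "\<dots> = - (\<Sum>j<n. \<Sum>i<n. h Y X i j)" by (simp add: sum_negf)
    also have "(\<Sum>j<n. \<Sum>i<n. h Y X i j) = (\<Sum>i<n. \<Sum>j<n. h Y X i j)" by (rule sum.swap)
    finally show ?thesis .
  qed
  then show ?thesis using ex by simp
qed



lemma ginv_sym:
  fixes g ginv :: "nat \<Rightarrow> nat \<Rightarrow> real"
  assumes sym: "\<forall>i<n. \<forall>j<n. g i j = g j i"
    and inv: "\<forall>i<n. \<forall>j<n. (\<Sum>k<n. g i k * ginv k j) = (if i = j then 1 else 0)"
  shows "\<forall>i<n. \<forall>j<n. ginv i j = ginv j i"
proof -
  define G where "G = mat n n (\<lambda>(i,j). g i j)"
  define H where "H = mat n n (\<lambda>(i,j). ginv i j)"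
  have G: "G \<in> carrier_mat n n" and H: "H \<in> carrier_mat n n" by (auto simp: G_def H_def)
  have GH: "G * H = 1\<^sub>m n"
    by (rule eq_matI) (auto simp: G_def H_def scalar_prod_def inv atLeast0LessThan)
  have HG: "H * G = 1\<^sub>m n" by (rule mat_mult_left_right_inverse[OF G H GH])
  have GT: "transpose_mat G = G" by (rule eq_matI) (auto simp: G_def sym)
  have "transpose_mat H * G = transpose_mat (G * H)"
    by (metis G H GT transpose_mult)
  then have HTG: "transpose_mat H * G = 1\<^sub>m n" by (simp add: GH)
  have "transpose_mat H = transpose_mat H * (G * H)" using H by (simp add: GH)
  also have "\<dots> = (transpose_mat H * G) * H" using G H by (simp add: assoc_mult_mat)
  also have "\<dots> = H" using H by (simp add: HTG)
  finally have "transpose_mat H = H" .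
  then show ?thesis
    by (auto simp: H_def) (metis (no_types, lifting) H_def case_prod_conv dim_col_mat(1) dim_row_mat(1) index_mat(1) index_transpose_mat(1))
qed



lemma interior_zero: "interior n Y (\<lambda>_. 0) = (\<lambda>_. 0)"
  unfolding interior_def by (rule ext) (auto intro!: sum.neutral)

lemma interior_lin2:
  "interior n Y (\<lambda>K. \<Sum>L<n. \<Sum>M<n. c L M * \<phi> L M K) K = (\<Sum>L<n. \<Sum>M<n. c L M * interior n Y (\<phi> L M) K)"
proof (cases "K \<subseteq> {..<n}")
  case False then show ?thesis by (simp add: interior_def)
next
  case True
  define f where "f i L M = c L M * (if i \<in> K then 0 else Y i * (-1::real) ^ card {j\<in>K. j < i} * \<phi> L M (insert i K))" for i L M
  have "interior n Y (\<lambda>K. \<Sum>L<n. \<Sum>M<n. c L M * \<phi> L M K) K = (\<Sum>i<n. \<Sum>L<n. \<Sum>M<n. f i L M)"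
    unfolding interior_def f_def using True by (auto simp: sum_distrib_left mult_ac intro!: sum.cong)
  also have "\<dots> = (\<Sum>L<n. \<Sum>i<n. \<Sum>M<n. f i L M)" by (rule sum.swap)
  also have "\<dots> = (\<Sum>L<n. \<Sum>M<n. \<Sum>i<n. f i L M)" by (rule sum.cong[OF refl], rule sum.swap)
  also have "\<dots> = (\<Sum>L<n. \<Sum>M<n. c L M * interior n Y (\<phi> L M) K)"
    unfolding interior_def f_def using True by (simp add: sum_distrib_left)
  finally show ?thesis .
qed

lemma contr_interior:
  assumes "\<forall>L. hdeg k (A L)"
  shows "interior n Y (contr_wedge n ginv A B) = (\<lambda>K. contr_wedge n ginv (\<lambda>L. interior n Y (A L)) B K
            + (-1)^k * contr_wedge n ginv A (\<lambda>L. interior n Y (B L)) K)"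
proof (rule ext)
  fix K
  have "interior n Y (contr_wedge n ginv A B) K = (\<Sum>L<n. \<Sum>M<n. ginv L M * interior n Y (wedge n (A L) (B M)) K)"
    unfolding contr_wedge_def by (rule interior_lin2)
  also have "\<dots> = (\<Sum>L<n. \<Sum>M<n. ginv L M * (wedge n (interior n Y (A L)) (B M) K + (-1)^k * wedge n (A L) (interior n Y (B M)) K))"
    using interior_wedge[of "A _" k] assms unfolding hdeg_def by simp
  also have "\<dots> = contr_wedge n ginv (\<lambda>L. interior n Y (A L)) B K
            + (-1)^k * contr_wedge n ginv A (\<lambda>L. interior n Y (B L)) K"
    unfolding contr_wedge_def by (simp add: sum.distrib sum_distrib_left algebra_simps)
  finally show "interior n Y (contr_wedge n ginv A B) K = contr_wedge n ginv (\<lambda>L. interior n Y (A L)) B K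
            + (-1)^k * contr_wedge n ginv A (\<lambda>L. interior n Y (B L)) K" .
qed

lemma contr_comm:
  assumes sym: "\<forall>i<n. \<forall>j<n. ginv i j = ginv j i"
    and a: "\<forall>L. hdeg k (A L)" and b: "\<forall>M. hdeg l (B M)"
  shows "contr_wedge n ginv A B K = (-1)^(k*l) * contr_wedge n ginv B A K"
proof -
  have "contr_wedge n ginv A B K = (\<Sum>L<n. \<Sum>M<n. (-1)^(k*l) * (ginv M L * wedge n (B M) (A L) K))"
    unfolding contr_wedge_def
    by (intro sum.cong refl) (simp add: wedge_comm[OF a[rule_format] b[rule_format]] sym)
  also have "\<dots> = (-1)^(k*l) * (\<Sum>L<n. \<Sum>M<n. ginv M L * wedge n (B M) (A L) K)"
    by (simp add: sum_distrib_left)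
  also have "(\<Sum>L<n. \<Sum>M<n. ginv M L * wedge n (B M) (A L) K) = contr_wedge n ginv B A K"
    unfolding contr_wedge_def by (rule sum.swap)
  finally show ?thesis .
qed

lemma contr_neg:
  "contr_wedge n ginv (\<lambda>L K. - A L K) B K = - contr_wedge n ginv A B K"
proof -
  have w: "wedge n (\<lambda>K. - A L K) (B M) K = - wedge n (A L) (B M) K" for L M
    unfolding wedge_def by (simp add: sum_negf[symmetric])
  show ?thesis by (simp add: contr_wedge_def w sum_negf[symmetric])
qed



theorem mainTheorem10:
  fixes n :: nat and g ginv :: "nat \<Rightarrow> nat \<Rightarrow> real" and F :: form
  assumes "nondeg_metric_with_inverse n g ginv"
    and "is_kform n 5 F"
    and "\<forall>X Y. contr_wedge n ginv (\<lambda>L. interior n X (F_idx n F L))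
                                   (\<lambda>L. interior n Y (F_idx n F L)) = (\<lambda>_. 0)"
    and "\<forall>X. contr_wedge n ginv (\<lambda>L. interior n X (F_idx n F L)) (F_idx n F) = (\<lambda>_. 0)"
  shows "(\<forall>X Y. contr_wedge n ginv (\<lambda>L. interior n Y (interior n X (F_idx n F L))) (F_idx n F)
                 = (\<lambda>_. 0))
       \<and> (\<forall>X Y Z. contr_wedge n ginv
                 (\<lambda>L. interior n Z (interior n Y (interior n X (F_idx n F L)))) (F_idx n F)
                 = (\<lambda>_. 0))"
proof -
  let ?F = "F_idx n F"
  have sym: "\<forall>i<n. \<forall>j<n. ginv i j = ginv j i"
    using assms(1) ginv_sym unfolding nondeg_metric_with_inverse_def by blast
  have h5: "hdeg 5 F" using assms(2) unfolding is_kform_def hdeg_def by blast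
  have h4: "hdeg 4 (?F L)" for L
    using hdeg_interior[OF h5, of n "basis_vec L"] unfolding F_idx_def by simp
  have h3: "hdeg 3 (interior n X (?F L))" for X L
    using hdeg_interior[OF h4, of n X] by simp
  have h2: "hdeg 2 (interior n Y (interior n X (?F L)))" for X Y L
    using hdeg_interior[OF h3, of n Y] by simp
  have H1: "contr_wedge n ginv (\<lambda>L. interior n X (?F L)) (\<lambda>L. interior n Y (?F L)) K = 0" for X Y K
    using assms(3) by metis
  have C1: "contr_wedge n ginv (\<lambda>L. interior n Y (interior n X (?F L))) ?F K = 0" for X Y K
  proof -
    have "interior n Y (contr_wedge n ginv (\<lambda>L. interior n X (?F L)) ?F) K = 0"
      using assms(4) interior_zero by metis
    then show ?thesis unfolding contr_interior[OF allI[OF h3]] H1 by simp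
  qed
  define A where "A X Y Z K = contr_wedge n ginv (\<lambda>L. interior n Y (interior n X (?F L))) (\<lambda>L. interior n Z (?F L)) K" for X Y Z K
  have R13: "A X Y Z K = A Z Y X K" for X Y Z K
  proof -
    have "interior n Y (contr_wedge n ginv (\<lambda>L. interior n X (?F L)) (\<lambda>L. interior n Z (?F L))) K = 0"
      using assms(3) interior_zero by metis
    then have "A X Y Z K = contr_wedge n ginv (\<lambda>L. interior n X (?F L)) (\<lambda>L. interior n Y (interior n Z (?F L))) K"
      unfolding contr_interior[OF allI[OF h3]] A_def by simp
    also have "\<dots> = contr_wedge n ginv (\<lambda>L. interior n Y (interior n Z (?F L))) (\<lambda>L. interior n X (?F L)) K"
      using contr_comm[OF sym allI[OF h3] allI[OF h2]] by simp
    finally show ?thesis unfolding A_def .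
  qed
  have R12: "A X Y Z K = - A Y X Z K" for X Y Z K
  proof -
    have e: "(\<lambda>L. interior n Y (interior n X (?F L))) = (\<lambda>L K. - interior n X (interior n Y (?F L)) K)"
      using interior_interior by blast
    show ?thesis unfolding A_def e contr_neg ..
  qed
  have A0: "A X Y Z K = 0" for X Y Z K
  proof -
    have "A X Y Z K = A Z Y X K" by (rule R13)
    also have "\<dots> = - A Y Z X K" by (rule R12)
    also have "A Y Z X K = A X Z Y K" by (rule R13)
    also have "A X Z Y K = - A Z X Y K" by (rule R12)
    also have "A Z X Y K = A Y X Z K" by (rule R13)
    also have "A Y X Z K = - A X Y Z K" by (rule R12)
    finally show ?thesis by simp
  qed
  have C2: "contr_wedge n ginv (\<lambda>L. interior n Z (interior n Y (interior n X (?F L)))) ?F K = 0" for X Y Z K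
  proof -
    have "interior n Z (contr_wedge n ginv (\<lambda>L. interior n Y (interior n X (?F L))) ?F) K = 0"
      using C1 interior_zero by (metis ext)
    then show ?thesis unfolding contr_interior[OF allI[OF h2]] using A0 unfolding A_def by simp
  qed
  show ?thesis using C1 C2 by blast
qed

end
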